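(* Assume the standing assumption (S), and suppose $|\eta(x)|\le U<\infty$ for all $x\in I$. Then there exists $A\in\mathbb R_+$ such that $a_N(y)\le\frac{A}{\sqrt N}$ for all $N\ge N_0$ and all $y\in I$.
   Context: Let $-\infty\le l<r\le\infty$, $I=(l,r)$, $\eta\colon\mathbb R\to\mathbb R$ Borel with $\eta\ne0$ on $I$, $1/\eta^2\in L^1_{\mathrm{loc}}(I)$, $\eta=0$ off $I$, $m\in I$. $q(y,x)=\int_y^x\int_y^u\frac{2}{\eta^2(z)}dz\,du\in[0,\infty]$; $q(l+)=\lim_{x\searrow l}q(m,x)$, $q(r-)=\lim_{x\nearrow r}q(m,x)$. $\mu\ne\delta_0$ is a centered probability measure with finite first moment, $G_y(a)=\int q(y,y+ax)\mu(dx)$ for $y\in I$, $a\ge0$. Standing assumption (S): one of the following holds. (S1) $l=-\infty$, $r=\infty$, and there is $y_0\in I$ with $G_{y_0}(a)<\infty$ for all $a>0$. (S2) $l>-\infty$, $r=\infty$, $\inf\operatorname{supp}\mu>-\infty$, there is $y_0\in I$ with $\int_{\mathbb R_+}q(y_0,y_0+ax)\mu(dx)<\infty$ for all $a>0$; if $q(l+)<\infty$ then $\mu(\{\inf\operatorname{supp}\mu\})>0$; if $q(l+)=\infty$ then $\liminf_{y\to\infty}G_y(\bar a(y))>0$ and $\liminf_{y\searrow l}G_y(\bar a(y))>0$, where $\bar a(y)=\frac{l-y}{\inf\operatorname{supp}\mu}$. (S3) the mirror image of (S2): $l=-\infty$, $r<\infty$, $\sup\operatorname{supp}\mu<\infty$,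 there is $y_0\in I$ with $\int_{(-\infty,0]}q(y_0,y_0+ax)\mu(dx)<\infty$ for all $a>0$; if $q(r-)<\infty$ then $\mu(\{\sup\operatorname{supp}\mu\})>0$; if $q(r-)=\infty$ then $\liminf_{y\to-\infty}G_y(\bar a(y))>0$ and $\liminf_{y\nearrow r}G_y(\bar a(y))>0$, where $\bar a(y)=\frac{r-y}{\sup\operatorname{supp}\mu}$. (S4) $-\infty<l<r<\infty$, $\mu$ has bounded support; with $\bar a(y)=\frac{l-y}{\inf\operatorname{supp}\mu}\wedge\frac{r-y}{\sup\operatorname{supp}\mu}$: if $q(l+)<\infty$ then $\mu(\{\inf\operatorname{supp}\mu\})>0$; if $q(l+)=\infty$ then $\liminf_{y\searrow l}G_y(\bar a(y))>0$; if $q(r-)<\infty$ then $\mu(\{\sup\operatorname{supp}\mu\})>0$; if $q(r-)=\infty$ then $\liminf_{y\nearrow r}G_y(\bar a(y))>0$. Under (S) there is $N_0\in\mathbb N$ and, for $N\ge N_0$, the scale factor $a_N(y)=\sup\{a\ge0:G_y(a)\le\frac1N\}$ for $y\in I$ and $a_N=0$ at finite endpoints of $I$. *)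

theory Defs
  imports "HOL-Probability.Probability"
begin

definition Ival :: "ereal \<Rightarrow> ereal \<Rightarrow> real set" where
  "Ival l r = {x. l < ereal x \<and> ereal x < r}"

text \<open>Integrand 2/eta^2, with value infinity where eta vanishes (i.e. off I).\<close>
definition inv_eta2 :: "(real \<Rightarrow> real) \<Rightarrow> real \<Rightarrow> ennreal" where
  "inv_eta2 \<eta> z = (if \<eta> z = 0 then \<infinity> else ennreal (2 / (\<eta> z)\<^sup>2))"

text \<open>q(y,x) = int_y^x int_y^u 2/eta^2(z) dz du in [0,infinity]; for x < y the two
  orientation signs cancel, so this is the integral over u between y and x of the
  integral over z between y and u.\<close>
definition qfun :: "(real \<Rightarrow> real) \<Rightarrow> real \<Rightarrow> real \<Rightarrow> ennreal" where
  "qfun \<eta> y x = (\<integral>\<^sup>+ u \<in> {min y x..max y x}.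
      (\<integral>\<^sup>+ z \<in> {min y u..max y u}. inv_eta2 \<eta> z \<partial>lborel) \<partial>lborel)"

definition q_lplus :: "(real \<Rightarrow> real) \<Rightarrow> real \<Rightarrow> real \<Rightarrow> ennreal" where
  "q_lplus \<eta> m l = Lim (at_right l) (\<lambda>x. qfun \<eta> m x)"

definition q_rminus :: "(real \<Rightarrow> real) \<Rightarrow> real \<Rightarrow> real \<Rightarrow> ennreal" where
  "q_rminus \<eta> m r = Lim (at_left r) (\<lambda>x. qfun \<eta> m x)"

definition Gfun :: "(real \<Rightarrow> real) \<Rightarrow> real measure \<Rightarrow> real \<Rightarrow> real \<Rightarrow> ennreal" where
  "Gfun \<eta> \<mu> y a = (\<integral>\<^sup>+ x. qfun \<eta> y (y + a * x) \<partial>\<mu>)"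

definition aN :: "(real \<Rightarrow> real) \<Rightarrow> real measure \<Rightarrow> nat \<Rightarrow> real \<Rightarrow> real" where
  "aN \<eta> \<mu> N y = Sup {a. a \<ge> 0 \<and> Gfun \<eta> \<mu> y a \<le> ennreal (1 / real N)}"

definition msupp :: "real measure \<Rightarrow> real set" where
  "msupp \<mu> = {x. \<forall>e>0. emeasure \<mu> (ball x e) > 0}"

definition S1 :: "(real \<Rightarrow> real) \<Rightarrow> real measure \<Rightarrow> ereal \<Rightarrow> ereal \<Rightarrow> bool" where
  "S1 \<eta> \<mu> l r \<longleftrightarrow> l = -\<infinity> \<and> r = \<infinity> \<and>
     (\<exists>y0\<in>Ival l r. \<forall>a>0. Gfun \<eta> \<mu> y0 a < \<infinity>)"

definition S2 :: "(real \<Rightarrow> real) \<Rightarrow> real measure \<Rightarrow> ereal \<Rightarrow> ereal \<Rightarrow> real \<Rightarrow> bool" where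
  "S2 \<eta> \<mu> l r m \<longleftrightarrow> l \<noteq> -\<infinity> \<and> r = \<infinity> \<and> bdd_below (msupp \<mu>) \<and>
     (\<exists>y0\<in>Ival l r. \<forall>a>0.
        (\<integral>\<^sup>+ x \<in> {0..}. qfun \<eta> y0 (y0 + a * x) \<partial>\<mu>) < \<infinity>) \<and>
     (let L = real_of_ereal l; s = Inf (msupp \<mu>); abar = (\<lambda>y. (L - y) / s) in
       (q_lplus \<eta> m L < \<infinity> \<longrightarrow> emeasure \<mu> {s} > 0) \<and>
       (q_lplus \<eta> m L = \<infinity> \<longrightarrow>
          Liminf at_top (\<lambda>y. Gfun \<eta> \<mu> y (abar y)) > 0 \<and>
          Liminf (at_right L) (\<lambda>y. Gfun \<eta> \<mu> y (abar y)) > 0))"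

definition S3 :: "(real \<Rightarrow> real) \<Rightarrow> real measure \<Rightarrow> ereal \<Rightarrow> ereal \<Rightarrow> real \<Rightarrow> bool" where
  "S3 \<eta> \<mu> l r m \<longleftrightarrow> l = -\<infinity> \<and> r \<noteq> \<infinity> \<and> bdd_above (msupp \<mu>) \<and>
     (\<exists>y0\<in>Ival l r. \<forall>a>0.
        (\<integral>\<^sup>+ x \<in> {..0}. qfun \<eta> y0 (y0 + a * x) \<partial>\<mu>) < \<infinity>) \<and>
     (let R = real_of_ereal r; s = Sup (msupp \<mu>); abar = (\<lambda>y. (R - y) / s) in
       (q_rminus \<eta> m R < \<infinity> \<longrightarrow> emeasure \<mu> {s} > 0) \<and>
       (q_rminus \<eta> m R = \<infinity> \<longrightarrow>
          Liminf at_bot (\<lambda>y. Gfun \<eta> \<mu> y (abar y)) > 0 \<and>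
          Liminf (at_left R) (\<lambda>y. Gfun \<eta> \<mu> y (abar y)) > 0))"

definition S4 :: "(real \<Rightarrow> real) \<Rightarrow> real measure \<Rightarrow> ereal \<Rightarrow> ereal \<Rightarrow> real \<Rightarrow> bool" where
  "S4 \<eta> \<mu> l r m \<longleftrightarrow> l \<noteq> -\<infinity> \<and> r \<noteq> \<infinity> \<and> bounded (msupp \<mu>) \<and>
     (let L = real_of_ereal l; R = real_of_ereal r;
          si = Inf (msupp \<mu>); ss = Sup (msupp \<mu>);
          abar = (\<lambda>y. min ((L - y) / si) ((R - y) / ss)) in
       (q_lplus \<eta> m L < \<infinity> \<longrightarrow> emeasure \<mu> {si} > 0) \<and>
       (q_lplus \<eta> m L = \<infinity> \<longrightarrow> Liminf (at_right L) (\<lambda>y. Gfun \<eta> \<mu> y (abar y)) > 0) \<and>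
       (q_rminus \<eta> m R < \<infinity> \<longrightarrow> emeasure \<mu> {ss} > 0) \<and>
       (q_rminus \<eta> m R = \<infinity> \<longrightarrow> Liminf (at_left R) (\<lambda>y. Gfun \<eta> \<mu> y (abar y)) > 0))"

definition standing_S :: "(real \<Rightarrow> real) \<Rightarrow> real measure \<Rightarrow> ereal \<Rightarrow> ereal \<Rightarrow> real \<Rightarrow> bool" where
  "standing_S \<eta> \<mu> l r m \<longleftrightarrow> S1 \<eta> \<mu> l r \<or> S2 \<eta> \<mu> l r m \<or> S3 \<eta> \<mu> l r m \<or> S4 \<eta> \<mu> l r m"

end

theory Submission
  imports Defs
begin


lemma inner_lb:
  assumes U: "U > 0" and inv: "\<And>z. inv_eta2 \<eta> z \<ge> ennreal (2/U\<^sup>2)"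
  shows "(\<integral>\<^sup>+ z \<in> {min y u..max y u}. inv_eta2 \<eta> z \<partial>lborel) \<ge> ennreal (2/U\<^sup>2 * \<bar>u - y\<bar>)"
proof -
  have "(\<integral>\<^sup>+ z \<in> {min y u..max y u}. inv_eta2 \<eta> z \<partial>lborel)
      \<ge> (\<integral>\<^sup>+ z. ennreal (2/U\<^sup>2) * indicator {min y u..max y u} z \<partial>lborel)"
    by (intro nn_integral_mono) (auto simp: inv mult_right_mono indicator_def)
  also have "(\<integral>\<^sup>+ z. ennreal (2/U\<^sup>2) * indicator {min y u..max y u} z \<partial>lborel)
     = ennreal (2/U\<^sup>2) * ennreal (max y u - min y u)"
    by (subst nn_integral_cmult_indicator) auto
  also have "\<dots> = ennreal (2/U\<^sup>2 * \<bar>u - y\<bar>)"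
    by (subst ennreal_mult[symmetric]) (auto simp: max_def min_def)
  finally show ?thesis .
qed

lemma qfun_lb:
  assumes U: "U > 0" and inv: "\<And>z. inv_eta2 \<eta> z \<ge> ennreal (2/U\<^sup>2)"
  shows "qfun \<eta> y x \<ge> ennreal ((x - y)\<^sup>2 / (2*U\<^sup>2))"
proof -
  define d where "d = \<bar>x - y\<bar>"
  define S where "S = (if y \<le> x then {y + d/2..x} else {x..y - d/2})"
  have Ssub: "S \<subseteq> {min y x..max y x}"
    by (auto simp: S_def d_def)
  have Sfar: "\<And>u. u \<in> S \<Longrightarrow> \<bar>u - y\<bar> \<ge> d/2"
  proof -
    fix u assume u: "u \<in> S"
    show "\<bar>u - y\<bar> \<ge> d/2"
    proof (cases "y \<le> x")
      case True
      then have "u \<ge> y + d/2" "d \<ge> 0" using u by (auto simp: S_def d_def)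
      then show ?thesis by linarith
    next
      case False
      then have "u \<le> y - d/2" "d \<ge> 0" using u by (auto simp: S_def d_def)
      then show ?thesis by linarith
    qed
  qed
  have Sm: "emeasure lborel S = ennreal (d/2)"
  proof (cases "y \<le> x")
    case True
    then have "emeasure lborel S = ennreal (x - (y + d/2))"
    proof -
      have "d = x - y" using True by (simp add: d_def)
      then have le: "y + d/2 \<le> x" using True by linarith
      have "S = {y + d/2..x}" using True by (simp add: S_def)
      then show ?thesis using emeasure_lborel_Icc[OF le] by simp
    qed
    also have "x - (y + d/2) = d/2" using True d_def by (simp add: abs_of_nonneg field_simps)
    finally show ?thesis .
  next
    case False
    then have "emeasure lborel S = ennreal ((y - d/2) - x)"
    proof -
      have "d = y - x" using False by (simp add: d_def)
      then have le: "x \<le> y - d/2" using False by linarith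
      have "S = {x..y - d/2}" using False by (simp add: S_def)
      then show ?thesis using emeasure_lborel_Icc[OF le] by simp
    qed
    also have "(y - d/2) - x = d/2" using False d_def by (simp add: abs_of_neg field_simps)
    finally show ?thesis .
  qed
  have "qfun \<eta> y x \<ge> (\<integral>\<^sup>+ u. ennreal (d/U\<^sup>2) * indicator S u \<partial>lborel)"
    unfolding qfun_def
  proof (intro nn_integral_mono)
    fix u
    show "ennreal (d/U\<^sup>2) * indicator S u \<le>
       (\<integral>\<^sup>+ z \<in> {min y u..max y u}. inv_eta2 \<eta> z \<partial>lborel) * indicator {min y x..max y x} u"
    proof (cases "u \<in> S")
      case True
      have "ennreal (d/U\<^sup>2) \<le> ennreal (2/U\<^sup>2 * \<bar>u - y\<bar>)"
        using Sfar[OF True] U by (intro ennreal_leI) (auto simp: field_simps)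
      also have "\<dots> \<le> (\<integral>\<^sup>+ z \<in> {min y u..max y u}. inv_eta2 \<eta> z \<partial>lborel)"
        by (rule inner_lb[OF U inv])
      finally show ?thesis using True Ssub by auto
    qed auto
  qed
  also have "(\<integral>\<^sup>+ u. ennreal (d/U\<^sup>2) * indicator S u \<partial>lborel) = ennreal (d/U\<^sup>2) * ennreal (d/2)"
    by (subst nn_integral_cmult_indicator) (simp add: S_def, simp add: Sm)
  also have "\<dots> = ennreal ((x - y)\<^sup>2 / (2*U\<^sup>2))"
    using U by (subst ennreal_mult[symmetric]) (auto simp: d_def power2_eq_square field_simps)
  finally show ?thesis .
qed


theorem mainTheorem12:
  fixes \<eta> :: "real \<Rightarrow> real" and \<mu> :: "real measure"
    and l r :: ereal and m U :: real and N0 :: nat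
  assumes lr: "l < r"
    and eta_borel: "\<eta> \<in> borel_measurable borel"
    and eta_nz: "\<forall>x\<in>Ival l r. \<eta> x \<noteq> 0"
    and eta_loc: "\<forall>K. compact K \<and> K \<subseteq> Ival l r \<longrightarrow>
                    set_integrable lborel K (\<lambda>z. 1 / (\<eta> z)\<^sup>2)"
    and eta_off: "\<forall>x. x \<notin> Ival l r \<longrightarrow> \<eta> x = 0"
    and m_in: "m \<in> Ival l r"
    and mu_prob: "prob_space \<mu>" and mu_sets: "sets \<mu> = sets borel"
    and mu_int: "integrable \<mu> (\<lambda>x. x)"
    and mu_centered: "(\<integral>x. x \<partial>\<mu>) = 0"
    and mu_nondeg: "\<mu> \<noteq> return borel 0"
    and S: "standing_S \<eta> \<mu> l r m"
    and N0: "N0 \<ge> 1"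
    and eta_bdd: "\<forall>x\<in>Ival l r. \<bar>\<eta> x\<bar> \<le> U"
  shows "\<exists>A\<ge>0. \<forall>N\<ge>N0. \<forall>y\<in>Ival l r. aN \<eta> \<mu> N y \<le> A / sqrt (real N)"
proof -
  have Ine: "\<bar>\<eta> m\<bar> > 0" using eta_nz m_in by auto
  have U: "U > 0" using eta_bdd m_in Ine by force
  have inv: "\<And>z. inv_eta2 \<eta> z \<ge> ennreal (2/U\<^sup>2)"
  proof -
    fix z
    show "inv_eta2 \<eta> z \<ge> ennreal (2/U\<^sup>2)"
    proof (cases "\<eta> z = 0")
      case True then show ?thesis by (simp add: inv_eta2_def)
    next
      case False
      then have zI: "z \<in> Ival l r" using eta_off by blast
      have "\<bar>\<eta> z\<bar> \<le> U" using eta_bdd zI by auto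
      then have "(\<eta> z)\<^sup>2 \<le> U\<^sup>2" by (metis abs_ge_zero abs_le_square_iff abs_of_pos U)
      moreover have "(\<eta> z)\<^sup>2 > 0" using False by auto
      ultimately have "2/U\<^sup>2 \<le> 2/(\<eta> z)\<^sup>2" using U by (intro divide_left_mono) (auto intro: mult_pos_pos)
      then show ?thesis using False by (simp add: inv_eta2_def ennreal_leI)
    qed
  qed
  interpret P: prob_space \<mu> by (rule mu_prob)
  have Emeas: "\<And>e. {x. e \<le> \<bar>x\<bar>} \<in> sets \<mu>"
    unfolding mu_sets by measurable
  have "\<exists>e>0. P.prob {x. e \<le> \<bar>x\<bar>} > 0"
  proof (rule ccontr)
    assume "\<not> ?thesis"
    then have h: "\<And>e. e > 0 \<Longrightarrow> P.prob {x. e \<le> \<bar>x\<bar>} = 0"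
      using measure_nonneg[of \<mu>] by (metis less_eq_real_def)
    have nn: "\<And>n::nat. {x. 1/Suc n \<le> \<bar>x\<bar>} \<in> null_sets \<mu>"
      using h Emeas by (auto simp: null_sets_def P.emeasure_eq_measure)
    have "(\<Union>n::nat. {x. 1/Suc n \<le> \<bar>x\<bar>}) \<in> null_sets \<mu>"
      using nn by (intro null_sets_UN) auto
    moreover have "{x \<in> space \<mu>. \<not> x = 0} \<subseteq> (\<Union>n::nat. {x. 1/Suc n \<le> \<bar>x\<bar>})"
    proof
      fix x assume "x \<in> {x \<in> space \<mu>. \<not> x = 0}"
      then have "\<bar>x\<bar> > 0" by auto
      then obtain n::nat where "1/Suc n < \<bar>x\<bar>" by (meson nat_approx_posE)
      then show "x \<in> (\<Union>n::nat. {x. 1/Suc n \<le> \<bar>x\<bar>})" by (auto intro: less_imp_le)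
    qed
    ultimately have AE0: "AE x in \<mu>. x = 0" by (rule AE_I')
    have "\<mu> = return borel 0"
    proof (rule measure_eqI)
      show "sets \<mu> = sets (return borel 0)" using mu_sets by simp
      fix A assume "A \<in> sets \<mu>"
      then have A: "A \<in> sets borel" using mu_sets by simp
      have "emeasure \<mu> A = (\<integral>\<^sup>+ x. indicator A x \<partial>\<mu>)"
        using \<open>A \<in> sets \<mu>\<close> by simp
      also have "\<dots> = (\<integral>\<^sup>+ x. indicator A (0::real) \<partial>\<mu>)"
        by (rule nn_integral_cong_AE) (use AE0 in auto)
      also have "\<dots> = indicator A (0::real)"
        by (simp add: P.emeasure_space_1)
      also have "\<dots> = emeasure (return borel 0) A"
        using A by (simp add: emeasure_return)
      finally show "emeasure \<mu> A = emeasure (return borel 0) A" .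
    qed
    then show False using mu_nondeg by simp
  qed
  then obtain e where e: "e > 0" and p: "P.prob {x. e \<le> \<bar>x\<bar>} > 0" by blast
  define p where "p = P.prob {x. e \<le> \<bar>x\<bar>}"
  have pp: "p > 0" using p p_def by simp
  define A where "A = sqrt (2*U\<^sup>2 / (e\<^sup>2 * p))"
  have Gb: "Gfun \<eta> \<mu> y a \<ge> ennreal (a\<^sup>2 * e\<^sup>2 * p / (2*U\<^sup>2))" for y a
  proof -
    have "Gfun \<eta> \<mu> y a \<ge> (\<integral>\<^sup>+ x. ennreal (a\<^sup>2 * e\<^sup>2 / (2*U\<^sup>2)) * indicator {x. e \<le> \<bar>x\<bar>} x \<partial>\<mu>)"
      unfolding Gfun_def
    proof (intro nn_integral_mono)
      fix x
      show "ennreal (a\<^sup>2 * e\<^sup>2 / (2*U\<^sup>2)) * indicator {x. e \<le> \<bar>x\<bar>} x \<le> qfun \<eta> y (y + a * x)"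
      proof (cases "e \<le> \<bar>x\<bar>")
        case True
        have "e\<^sup>2 \<le> x\<^sup>2" using True e by (metis abs_le_square_iff abs_of_pos)
        then have "a\<^sup>2 * e\<^sup>2 \<le> a\<^sup>2 * x\<^sup>2" by (intro mult_left_mono) auto
        then have "a\<^sup>2 * e\<^sup>2 / (2*U\<^sup>2) \<le> (y + a * x - y)\<^sup>2 / (2*U\<^sup>2)"
          using U by (intro divide_right_mono) (auto simp: power_mult_distrib)
        then have "ennreal (a\<^sup>2 * e\<^sup>2 / (2*U\<^sup>2)) \<le> ennreal ((y + a * x - y)\<^sup>2 / (2*U\<^sup>2))"
          by (rule ennreal_leI)
        also have "\<dots> \<le> qfun \<eta> y (y + a * x)" by (rule qfun_lb[OF U inv])
        finally show ?thesis using True by simp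
      qed simp
    qed
    also have "(\<integral>\<^sup>+ x. ennreal (a\<^sup>2 * e\<^sup>2 / (2*U\<^sup>2)) * indicator {x. e \<le> \<bar>x\<bar>} x \<partial>\<mu>)
        = ennreal (a\<^sup>2 * e\<^sup>2 / (2*U\<^sup>2)) * ennreal p"
      using Emeas by (simp add: nn_integral_cmult_indicator P.emeasure_eq_measure p_def)
    also have "\<dots> = ennreal (a\<^sup>2 * e\<^sup>2 * p / (2*U\<^sup>2))"
      using pp by (subst ennreal_mult[symmetric]) auto
    finally show ?thesis .
  qed
  have "\<forall>N\<ge>N0. \<forall>y\<in>Ival l r. aN \<eta> \<mu> N y \<le> A / sqrt (real N)"
  proof (intro allI impI ballI)
    fix N y assume N: "N \<ge> N0" and y: "y \<in> Ival l r"
    have Npos: "real N > 0" using N N0 by simp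
    have G0: "Gfun \<eta> \<mu> y 0 = 0"
    proof -
      have "{y..y} \<in> null_sets lborel" by (simp add: null_sets_def)
      then show ?thesis unfolding Gfun_def qfun_def
        by (simp add: nn_integral_null_set)
    qed
    have "Sup {a. a \<ge> 0 \<and> Gfun \<eta> \<mu> y a \<le> ennreal (1 / real N)} \<le> A / sqrt (real N)"
    proof (rule cSup_least)
      show "{a. a \<ge> 0 \<and> Gfun \<eta> \<mu> y a \<le> ennreal (1 / real N)} \<noteq> {}"
        using G0 by auto
      fix a assume "a \<in> {a. a \<ge> 0 \<and> Gfun \<eta> \<mu> y a \<le> ennreal (1 / real N)}"
      then have a0: "a \<ge> 0" and aG: "Gfun \<eta> \<mu> y a \<le> ennreal (1 / real N)" by auto
      have "ennreal (a\<^sup>2 * e\<^sup>2 * p / (2*U\<^sup>2)) \<le> ennreal (1 / real N)"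
        by (rule order.trans[OF Gb aG])
      then have "a\<^sup>2 * e\<^sup>2 * p / (2*U\<^sup>2) \<le> 1 / real N"
        using Npos by (subst (asm) ennreal_le_iff) auto
      then have "a\<^sup>2 \<le> 2*U\<^sup>2 / (e\<^sup>2 * p) / real N"
        using Npos pp e U by (simp add: field_simps)
      then have "a \<le> sqrt (2*U\<^sup>2 / (e\<^sup>2 * p) / real N)"
        by (rule real_le_rsqrt)
      then show "a \<le> A / sqrt (real N)"
        by (simp add: A_def real_sqrt_divide real_sqrt_mult)
    qed
    then show "aN \<eta> \<mu> N y \<le> A / sqrt (real N)" by (simp add: aN_def)
  qed
  moreover have "A \<ge> 0" using pp by (simp add: A_def)
  ultimately show ?thesis by blast
qed

end
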